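(* Let $S$ (students) and $C$ (colleges) be finite disjoint sets with preferences and capacities as described in the context, and let $\mu,\mu'$ be two stable many-to-one matchings on $S\cup C$. Suppose $s\in S$ satisfies $\mu'(s)\succ_s\mu(s)$. Then $s$ belongs to a preference cycle $s_0c_0s_1c_1\dots s_kc_ks_0$ which is $(S,\mu)$-dominated and $(S,\mu')$-dominating, and every college $c_i$ in this cycle satisfies $|\mu(c_i)|=|\mu'(c_i)|=q_{c_i}$.
   Context: Each student $s\in S$ has a strict preference order $\succ_s$ over $C\cup\{\emptyset\}$, $\emptyset$ being the outside option. Each college $c\in C$ has a capacity $q_c\in\mathbb{Z}_{\geq 1}$ and a strict ranking $\succ_c$ over $S\cup\{\emptyset\}$; $c$ likes $s$ if $s\succ_c\emptyset$. College preferences over sets of students are responsive to this ranking: for any set $A\subseteq S$ and distinct $s_1,s_2\notin A$, $c$ prefers $A\cup\{s_1\}$ to $A\cup\{s_2\}$ iff $s_1\succ_c s_2$. A many-to-one matching is a map $\mu$ with $\mu(s)\in C\cup\{\emptyset\}$ for $s\in S$ and $\mu(c)=\{s\in S:\mu(s)=c\}$ for $c\in C$. It is individually rational if $\mu(s)\succ_s\emptyset$ whenever $\mu(s)\neq\emptyset$, every $c$ likes every student in $\mu(c)$, and $|\mu(c)|\le q_c$ for all $c$. A pair $(s,c)\in S\times C$ blocks $\mu$ if $c\succ_s\mu(s)$ and either $s\succ_c s'$ for some $s'\in\mu(c)$, or $c$ likes $s$ and $|\mu(c)|<q_c$. $\mu$ is stable if it is individually rational and has no blocking pair. A preference cycle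 is a cyclic list $s_0c_0s_1c_1\dots s_kc_ks_0$ of pairwise distinct agents, $s_i\in S$, $c_i\in C$, such that each agent strictly prefers (according to its ranking) its successor in the cycle to its predecessor. For a matching $\mu$ and $X\in\{S,C\}$, a preference cycle is $(X,\mu)$-dominated if for every agent $a\in X$ in the cycle: if $a\in S$, its predecessor is $\mu(a)$; if $a\in C$, its predecessor belongs to $\mu(a)$. It is $(X,\mu)$-dominating if the same holds with "successor" in place of "predecessor". *)

theory Defs
  imports Main
begin

(* Students have type 's, colleges type 'c (so S and C are disjoint).
   The outside option \<emptyset> is represented by None.
   ps s x y : student s strictly prefers x to y   (x y :: 'c option)
   pc c x y : college c strictly prefers x to y   (x y :: 's option)
   q c      : capacity of college c
   mu s     : the partner of student s (None = unmatched)              *)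

definition strict_total_on :: "'a set \<Rightarrow> ('a \<Rightarrow> 'a \<Rightarrow> bool) \<Rightarrow> bool" where
  "strict_total_on A R \<longleftrightarrow>
     (\<forall>x\<in>A. \<not> R x x) \<and>
     (\<forall>x\<in>A. \<forall>y\<in>A. \<forall>z\<in>A. R x y \<longrightarrow> R y z \<longrightarrow> R x z) \<and>
     (\<forall>x\<in>A. \<forall>y\<in>A. x \<noteq> y \<longrightarrow> R x y \<or> R y x)"

definition market ::
  "'s set \<Rightarrow> 'c set \<Rightarrow> ('s \<Rightarrow> 'c option \<Rightarrow> 'c option \<Rightarrow> bool)
   \<Rightarrow> ('c \<Rightarrow> 's option \<Rightarrow> 's option \<Rightarrow> bool) \<Rightarrow> ('c \<Rightarrow> nat) \<Rightarrow> bool" where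
  "market S C ps pc q \<longleftrightarrow> finite S \<and> finite C \<and>
     (\<forall>s\<in>S. strict_total_on (Some ` C \<union> {None}) (ps s)) \<and>
     (\<forall>c\<in>C. strict_total_on (Some ` S \<union> {None}) (pc c)) \<and>
     (\<forall>c\<in>C. q c \<ge> 1)"

definition assigned :: "'s set \<Rightarrow> ('s \<Rightarrow> 'c option) \<Rightarrow> 'c \<Rightarrow> 's set" where
  "assigned S mu c = {s \<in> S. mu s = Some c}"

definition matching :: "'s set \<Rightarrow> 'c set \<Rightarrow> ('s \<Rightarrow> 'c option) \<Rightarrow> bool" where
  "matching S C mu \<longleftrightarrow> (\<forall>s\<in>S. mu s \<in> Some ` C \<union> {None})"

definition likes :: "('c \<Rightarrow> 's option \<Rightarrow> 's option \<Rightarrow> bool) \<Rightarrow> 'c \<Rightarrow> 's \<Rightarrow> bool" where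
  "likes pc c s \<longleftrightarrow> pc c (Some s) None"

definition individually_rational ::
  "'s set \<Rightarrow> 'c set \<Rightarrow> ('s \<Rightarrow> 'c option \<Rightarrow> 'c option \<Rightarrow> bool)
   \<Rightarrow> ('c \<Rightarrow> 's option \<Rightarrow> 's option \<Rightarrow> bool) \<Rightarrow> ('c \<Rightarrow> nat) \<Rightarrow> ('s \<Rightarrow> 'c option) \<Rightarrow> bool" where
  "individually_rational S C ps pc q mu \<longleftrightarrow>
     (\<forall>s\<in>S. mu s \<noteq> None \<longrightarrow> ps s (mu s) None) \<and>
     (\<forall>c\<in>C. \<forall>s\<in>assigned S mu c. likes pc c s) \<and>
     (\<forall>c\<in>C. card (assigned S mu c) \<le> q c)"

definition blocks ::
  "'s set \<Rightarrow> ('s \<Rightarrow> 'c option \<Rightarrow> 'c option \<Rightarrow> bool)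
   \<Rightarrow> ('c \<Rightarrow> 's option \<Rightarrow> 's option \<Rightarrow> bool) \<Rightarrow> ('c \<Rightarrow> nat) \<Rightarrow> ('s \<Rightarrow> 'c option) \<Rightarrow> 's \<Rightarrow> 'c \<Rightarrow> bool" where
  "blocks S ps pc q mu s c \<longleftrightarrow>
     ps s (Some c) (mu s) \<and>
     ((\<exists>s'\<in>assigned S mu c. pc c (Some s) (Some s')) \<or>
      (likes pc c s \<and> card (assigned S mu c) < q c))"

definition stable ::
  "'s set \<Rightarrow> 'c set \<Rightarrow> ('s \<Rightarrow> 'c option \<Rightarrow> 'c option \<Rightarrow> bool)
   \<Rightarrow> ('c \<Rightarrow> 's option \<Rightarrow> 's option \<Rightarrow> bool) \<Rightarrow> ('c \<Rightarrow> nat) \<Rightarrow> ('s \<Rightarrow> 'c option) \<Rightarrow> bool" where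
  "stable S C ps pc q mu \<longleftrightarrow> matching S C mu \<and> individually_rational S C ps pc q mu \<and>
     (\<forall>s\<in>S. \<forall>c\<in>C. \<not> blocks S ps pc q mu s c)"

(* A preference cycle s_0 c_0 s_1 c_1 ... s_k c_k s_0 is given by the lists
   ss = [s_0,...,s_k] and cs = [c_0,...,c_k] (n = k+1 = length ss = length cs).
   Predecessor of s_i is c_{i-1 mod n}, successor is c_i;
   predecessor of c_i is s_i, successor is s_{i+1 mod n}. *)
definition pref_cycle ::
  "'s set \<Rightarrow> 'c set \<Rightarrow> ('s \<Rightarrow> 'c option \<Rightarrow> 'c option \<Rightarrow> bool)
   \<Rightarrow> ('c \<Rightarrow> 's option \<Rightarrow> 's option \<Rightarrow> bool) \<Rightarrow> 's list \<Rightarrow> 'c list \<Rightarrow> bool" where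
  "pref_cycle S C ps pc ss cs \<longleftrightarrow>
     ss \<noteq> [] \<and> length cs = length ss \<and> distinct ss \<and> distinct cs \<and>
     set ss \<subseteq> S \<and> set cs \<subseteq> C \<and>
     (\<forall>i<length ss. ps (ss ! i) (Some (cs ! i))
                       (Some (cs ! ((i + length ss - 1) mod length ss)))) \<and>
     (\<forall>i<length ss. pc (cs ! i) (Some (ss ! ((i + 1) mod length ss))) (Some (ss ! i)))"

definition S_dominated :: "('s \<Rightarrow> 'c option) \<Rightarrow> 's list \<Rightarrow> 'c list \<Rightarrow> bool" where
  "S_dominated mu ss cs \<longleftrightarrow>
     (\<forall>i<length ss. mu (ss ! i) = Some (cs ! ((i + length ss - 1) mod length ss)))"

definition S_dominating :: "('s \<Rightarrow> 'c option) \<Rightarrow> 's list \<Rightarrow> 'c list \<Rightarrow> bool" where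
  "S_dominating mu ss cs \<longleftrightarrow> (\<forall>i<length ss. mu (ss ! i) = Some (cs ! i))"

end

theory Submission
  imports Defs
begin

lemma funpow_in: "f ` A \<subseteq> A \<Longrightarrow> x \<in> A \<Longrightarrow> (f^^k) x \<in> A"
  by (induction k) auto

lemma funpow_cancel:
  assumes "inj_on f A" "f ` A \<subseteq> A" "x \<in> A" "(f^^(i+m)) x = (f^^i) x"
  shows "(f^^m) x = x"
  using assms(4)
proof (induction i)
  case 0 then show ?case by simp
next
  case (Suc i)
  have a1: "(f^^(i+m)) x \<in> A" by (rule funpow_in[OF assms(2,3)])
  have a2: "(f^^i) x \<in> A" by (rule funpow_in[OF assms(2,3)])
  have "f ((f^^(i+m)) x) = f ((f^^i) x)" using Suc.prems by simp
  then have "(f^^(i+m)) x = (f^^i) x" by (rule inj_onD[OF assms(1) _ a1 a2])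
  then show ?case by (rule Suc.IH)
qed

lemma st_irr: "strict_total_on A R \<Longrightarrow> x \<in> A \<Longrightarrow> \<not> R x x"
  unfolding strict_total_on_def by blast
lemma st_trans: "strict_total_on A R \<Longrightarrow> x \<in> A \<Longrightarrow> y \<in> A \<Longrightarrow> z \<in> A \<Longrightarrow> R x y \<Longrightarrow> R y z \<Longrightarrow> R x z"
  unfolding strict_total_on_def by blast
lemma st_tot: "strict_total_on A R \<Longrightarrow> x \<in> A \<Longrightarrow> y \<in> A \<Longrightarrow> x \<noteq> y \<Longrightarrow> R x y \<or> R y x"
  unfolding strict_total_on_def by blast

theorem lemma3:
  fixes S :: "'s set" and C :: "'c set"
    and ps :: "'s \<Rightarrow> 'c option \<Rightarrow> 'c option \<Rightarrow> bool"
    and pc :: "'c \<Rightarrow> 's option \<Rightarrow> 's option \<Rightarrow> bool"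
    and q :: "'c \<Rightarrow> nat"
    and mu mu' :: "'s \<Rightarrow> 'c option"
  assumes "market S C ps pc q"
    and "stable S C ps pc q mu"
    and "stable S C ps pc q mu'"
    and "s \<in> S"
    and "ps s (mu' s) (mu s)"
  shows "\<exists>ss cs. pref_cycle S C ps pc ss cs \<and> s \<in> set ss \<and>
           S_dominated mu ss cs \<and> S_dominating mu' ss cs \<and>
           (\<forall>c\<in>set cs. card (assigned S mu c) = q c \<and> card (assigned S mu' c) = q c)"
proof -
  have finS: "finite S" using assms(1) unfolding market_def by blast
  have psT: "\<And>x. x\<in>S \<Longrightarrow> strict_total_on (Some ` C \<union> {None}) (ps x)"
    using assms(1) unfolding market_def by blast
  have pcT: "\<And>c. c\<in>C \<Longrightarrow> strict_total_on (Some ` S \<union> {None}) (pc c)"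
    using assms(1) unfolding market_def by blast
  have dom: "\<And>x. x\<in>S \<Longrightarrow> mu x \<in> Some ` C \<union> {None}"
    using assms(2) unfolding stable_def matching_def by blast
  have dom': "\<And>x. x\<in>S \<Longrightarrow> mu' x \<in> Some ` C \<union> {None}"
    using assms(3) unfolding stable_def matching_def by blast
  have ir: "individually_rational S C ps pc q mu"
    using assms(2) unfolding stable_def by blast
  have ir': "individually_rational S C ps pc q mu'"
    using assms(3) unfolding stable_def by blast
  have nb: "\<And>x c. x\<in>S \<Longrightarrow> c\<in>C \<Longrightarrow> \<not> blocks S ps pc q mu x c"
    using assms(2) unfolding stable_def by blast
  have nb': "\<And>x c. x\<in>S \<Longrightarrow> c\<in>C \<Longrightarrow> \<not> blocks S ps pc q mu' x c"
    using assms(3) unfolding stable_def by blast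
  define P where "P x \<longleftrightarrow> x \<in> S \<and> ps x (mu' x) (mu x)" for x
  have P_some: "\<exists>c\<in>C. mu' x = Some c" if "P x" for x
  proof (rule ccontr)
    assume "\<not> ?thesis"
    then have n: "mu' x = None" using dom' that unfolding P_def by blast
    have xS: "x \<in> S" using that unfolding P_def by blast
    have p: "ps x None (mu x)" using that n unfolding P_def by simp
    show False
    proof (cases "mu x")
      case None then show False using p st_irr[OF psT[OF xS], of None] by auto
    next
      case (Some d)
      then have "ps x (mu x) None" using ir xS unfolding individually_rational_def by blast
      then show False using p st_irr[OF psT[OF xS], of None] st_trans[OF psT[OF xS], of None "mu x" None] dom[OF xS] by blast
    qed
  qed
  have K1: "card (assigned S mu c) = q c \<and> (\<forall>t\<in>assigned S mu c. pc c (Some t) (Some x)) \<and> mu x \<noteq> Some c"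
    if "P x" "mu' x = Some c" "c \<in> C" for x c
  proof -
    have xS: "x \<in> S" and p: "ps x (Some c) (mu x)" using that unfolding P_def by auto
    have ne: "mu x \<noteq> Some c" using p st_irr[OF psT[OF xS], of "Some c"] that(3) by auto
    have lk: "likes pc c x" using ir' xS that(2,3) unfolding individually_rational_def assigned_def by blast
    have nbl: "\<not> blocks S ps pc q mu x c" using nb xS that(3) by blast
    have c1: "\<not> card (assigned S mu c) < q c" using nbl p lk unfolding blocks_def by blast
    have c2: "card (assigned S mu c) \<le> q c" using ir that(3) unfolding individually_rational_def by blast
    have c3: "\<forall>t\<in>assigned S mu c. pc c (Some t) (Some x)"
    proof
      fix t assume t: "t \<in> assigned S mu c"
      have tS: "t \<in> S" and tne: "t \<noteq> x" using t ne unfolding assigned_def by auto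
      have "\<not> pc c (Some x) (Some t)" using nbl p t unfolding blocks_def by blast
      then show "pc c (Some t) (Some x)" using st_tot[OF pcT[OF that(3)], of "Some t" "Some x"] tS xS tne by blast
    qed
    show ?thesis using c1 c2 c3 ne by simp
  qed
  have K2: "P t" if "P x" "mu' x = Some c" "c \<in> C" "t \<in> assigned S mu c" "mu' t \<noteq> Some c" for x c t
  proof -
    have tS: "t \<in> S" and mt: "mu t = Some c" using that(4) unfolding assigned_def by auto
    have xS: "x \<in> S" using that unfolding P_def by auto
    have xa: "x \<in> assigned S mu' c" using xS that(2) unfolding assigned_def by auto
    have pr: "pc c (Some t) (Some x)" using K1[OF that(1-3)] that(4) by blast
    have "\<not> ps t (Some c) (mu' t)" using nb'[OF tS that(3)] xa pr unfolding blocks_def by blast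
    then have "ps t (mu' t) (Some c)" using st_tot[OF psT[OF tS], of "mu' t" "Some c"] dom'[OF tS] that(3,5) by blast
    then show ?thesis using tS mt unfolding P_def by simp
  qed
  define A where "A c = {x. P x \<and> mu' x = Some c}" for c
  define B where "B c = assigned S mu c - assigned S mu' c" for c
  have finA: "finite (A c)" for c using finS unfolding A_def P_def by (auto intro: finite_subset)
  have finAs: "finite (assigned S m c)" for m c using finS unfolding assigned_def by auto
  have AB: "card (A c) \<le> card (B c) \<and> B c \<subseteq> Collect P" if cC: "c \<in> C" and nA: "A c \<noteq> {}" for c
  proof -
    obtain x where x: "P x" "mu' x = Some c" using nA unfolding A_def by blast
    have k: "card (assigned S mu c) = q c" using K1[OF x cC] by blast
    have le: "card (assigned S mu' c) \<le> q c" using ir' cC unfolding individually_rational_def by blast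
    have sub: "A c \<subseteq> assigned S mu' c - assigned S mu c"
    proof
      fix y assume "y \<in> A c"
      then have y: "P y" "mu' y = Some c" unfolding A_def by auto
      have "mu y \<noteq> Some c" using K1[OF y cC] by blast
      then show "y \<in> assigned S mu' c - assigned S mu c" using y unfolding assigned_def P_def by auto
    qed
    have "card (A c) \<le> card (assigned S mu' c - assigned S mu c)"
      using sub finAs by (meson card_mono finite_Diff)
    also have "\<dots> = card (assigned S mu' c) - card (assigned S mu' c \<inter> assigned S mu c)"
      by (rule card_Diff_subset_Int) (rule finite_Int, rule disjI1, rule finAs)
    also have "\<dots> \<le> card (assigned S mu c) - card (assigned S mu c \<inter> assigned S mu' c)"
      using k le by (simp add: Int_commute)
    also have "\<dots> = card (B c)"
      unfolding B_def by (rule card_Diff_subset_Int[symmetric]) (rule finite_Int, rule disjI1, rule finAs)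
    finally have 1: "card (A c) \<le> card (B c)" .
    have 2: "B c \<subseteq> Collect P"
    proof
      fix t assume "t \<in> B c"
      then have "t \<in> assigned S mu c" "mu' t \<noteq> Some c" unfolding B_def assigned_def by auto
      then show "t \<in> Collect P" using K2[OF x cC] by blast
    qed
    show ?thesis using 1 2 by blast
  qed
  have gex: "\<forall>c\<in>C. \<exists>g. A c \<noteq> {} \<longrightarrow> (inj_on g (A c) \<and> g ` A c \<subseteq> B c)"
  proof
    fix c assume c: "c \<in> C"
    show "\<exists>g. A c \<noteq> {} \<longrightarrow> (inj_on g (A c) \<and> g ` A c \<subseteq> B c)"
    proof (cases "A c = {}")
      case True then show ?thesis by blast
    next
      case False
      have "finite (B c)" unfolding B_def by (rule finite_Diff, rule finAs)
      moreover have "card (A c) \<le> card (B c)" using AB[OF c False] by blast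
      ultimately obtain g where "g ` A c \<subseteq> B c" "inj_on g (A c)"
        using card_le_inj[OF finA] by metis
      then show ?thesis by blast
    qed
  qed
  obtain g where g: "\<And>c. c\<in>C \<Longrightarrow> A c \<noteq> {} \<Longrightarrow> inj_on (g c) (A c) \<and> g c ` A c \<subseteq> B c"
    using bchoice[OF gex] by blast
  define f where "f x = g (the (mu' x)) x" for x
  have f1: "P (f x) \<and> mu (f x) = mu' x" if xP: "P x" for x
  proof -
    obtain c where c: "c \<in> C" "mu' x = Some c" using P_some[OF xP] by blast
    have xA: "x \<in> A c" using xP c unfolding A_def by auto
    then have ne: "A c \<noteq> {}" by blast
    have "f x \<in> B c" using g[OF c(1) ne] xA c(2) unfolding f_def by auto
    then show ?thesis using AB[OF c(1) ne] c(2) unfolding B_def assigned_def by auto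
  qed
  have finP: "finite (Collect P)" using finS unfolding P_def by auto
  have fimg: "f ` Collect P \<subseteq> Collect P" using f1 by blast
  have finj: "inj_on f (Collect P)"
  proof (rule inj_onI)
    fix x y assume x: "x \<in> Collect P" and y: "y \<in> Collect P" and e: "f x = f y"
    obtain c where c: "c \<in> C" "mu' x = Some c" using P_some x by blast
    have "mu' y = Some c" using f1 x y e c by (metis mem_Collect_eq)
    then have xA: "x \<in> A c" and yA: "y \<in> A c" using x y c unfolding A_def by auto
    then have ne: "A c \<noteq> {}" by blast
    have "g c x = g c y" using e c \<open>mu' y = Some c\<close> unfolding f_def by simp
    then show "x = y" using g[OF c(1) ne] xA yA by (meson inj_onD)
  qed
  have fsurj: "f ` Collect P = Collect P" by (rule endo_inj_surj[OF finP fimg finj])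
  have cardmu': "card (assigned S mu' c) = q c" if "P x" "mu' x = Some c" "c \<in> C" for x c
  proof -
    have xA: "x \<in> A c" using that unfolding A_def by auto
    then have ne: "A c \<noteq> {}" by blast
    have k: "card (assigned S mu c) = q c" using K1[OF that] by blast
    have le: "card (assigned S mu' c) \<le> q c" using ir' that(3) unfolding individually_rational_def by blast
    have BA: "B c \<subseteq> f ` A c"
    proof
      fix t assume t: "t \<in> B c"
      then have "t \<in> Collect P" using AB[OF that(3) ne] by blast
      then obtain y where y: "P y" "t = f y" using fsurj by (metis imageE mem_Collect_eq)
      have "mu t = Some c" using t unfolding B_def assigned_def by auto
      then have "mu' y = Some c" using f1[OF y(1)] y(2) by simp
      then show "t \<in> f ` A c" using y unfolding A_def by auto
    qed
    have "card (B c) \<le> card (A c)" using card_image_le[OF finA, of f c] card_mono[OF finite_imageI[OF finA] BA] by linarith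
    also have "\<dots> \<le> card (assigned S mu' c - assigned S mu c)"
    proof (rule card_mono)
      show "A c \<subseteq> assigned S mu' c - assigned S mu c"
      proof
        fix y assume "y \<in> A c"
        then have y: "P y" "mu' y = Some c" unfolding A_def by auto
        have "mu y \<noteq> Some c" using K1[OF y that(3)] by blast
        then show "y \<in> assigned S mu' c - assigned S mu c" using y unfolding assigned_def P_def by auto
      qed
    qed (simp add: finAs)
    also have "\<dots> = card (assigned S mu' c) - card (assigned S mu' c \<inter> assigned S mu c)"
      by (rule card_Diff_subset_Int) (rule finite_Int, rule disjI1, rule finAs)
    finally have "card (B c) \<le> card (assigned S mu' c) - card (assigned S mu' c \<inter> assigned S mu c)" .
    moreover have "card (B c) = card (assigned S mu c) - card (assigned S mu c \<inter> assigned S mu' c)"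
      unfolding B_def by (rule card_Diff_subset_Int) (rule finite_Int, rule disjI1, rule finAs)
    moreover have "card (assigned S mu c \<inter> assigned S mu' c) \<le> card (assigned S mu c)"
      by (rule card_mono) (rule finAs, blast)
    moreover have "card (assigned S mu c \<inter> assigned S mu' c) \<le> card (assigned S mu' c)"
      by (rule card_mono) (rule finAs, blast)
    ultimately show ?thesis using k le by (simp add: Int_commute)
  qed
  define nx where "nx n k = (if Suc k = n then 0 else Suc k)" for n k :: nat
  define walk where "walk w n \<longleftrightarrow> 0 < n \<and> w 0 = s \<and> (\<forall>k<n. P (w k)) \<and> (\<forall>k<n. mu (w (nx n k)) = mu' (w k))"
    for w :: "nat \<Rightarrow> 's" and n
  have Ps: "P s" using assms(4,5) unfolding P_def by blast
  have orbit: "(f^^k) s \<in> Collect P" for k by (rule funpow_in[OF fimg]) (simp add: Ps)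
  have ninj: "\<not> inj (\<lambda>k. (f^^k) s)"
  proof
    assume i: "inj (\<lambda>k. (f^^k) s)"
    have r: "range (\<lambda>k. (f^^k) s) \<subseteq> Collect P" using orbit by blast
    have "finite (range (\<lambda>k. (f^^k) s))" by (rule finite_subset[OF r finP])
    then have "finite (UNIV::nat set)" by (rule finite_imageD) (rule i)
    then show False by simp
  qed
  then obtain i j where ij: "(f^^i) s = (f^^j) s" "i \<noteq> j" unfolding inj_def by blast
  have "\<exists>m>0. (f^^m) s = s"
  proof (cases "i < j")
    case True
    have "(f^^(i + (j-i))) s = (f^^i) s" using ij True by simp
    then have "(f^^(j-i)) s = s" using funpow_cancel[OF finj fimg] Ps by blast
    then show ?thesis using True by (intro exI[of _ "j-i"]) simp
  next
    case False
    then have ji: "j < i" using ij(2) by simp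
    have "(f^^(j + (i-j))) s = (f^^j) s" using ij ji by simp
    then have "(f^^(i-j)) s = s" using funpow_cancel[OF finj fimg] Ps by blast
    then show ?thesis using ji by (intro exI[of _ "i-j"]) simp
  qed
  then obtain m where m: "m > 0" "(f^^m) s = s" by blast
  have ex: "walk (\<lambda>k. (f^^k) s) m"
    unfolding walk_def
  proof (intro conjI allI impI)
    show "0 < m" using m by simp
    show "(f^^0) s = s" by simp
    fix k assume k: "k < m"
    show "P ((f^^k) s)" using orbit[of k] by simp
    have e: "mu (f ((f^^k) s)) = mu' ((f^^k) s)" using f1[of "(f^^k) s"] orbit[of k] by simp
    show "mu ((f^^(nx m k)) s) = mu' ((f^^k) s)"
    proof (cases "Suc k = m")
      case True
      have n0: "nx m k = 0" using True unfolding nx_def by simp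
      have "(f^^(Suc k)) s = s" using m(2) True by simp
      then have "f ((f^^k) s) = s" by simp
      then show ?thesis using e n0 by simp
    next
      case False
      then show ?thesis using e unfolding nx_def by simp
    qed
  qed
  define n where "n = (LEAST n. \<exists>w. walk w n)"
  have "\<exists>w. walk w n" unfolding n_def by (rule LeastI_ex) (use ex in blast)
  then obtain w where w: "walk w n" by blast
  have minn: "n \<le> n'" if "walk w' n'" for w' n' unfolding n_def by (rule Least_le) (use that in blast)
  have npos: "0 < n" and w0: "w 0 = s" and wP: "\<And>k. k < n \<Longrightarrow> P (w k)"
    and W: "\<And>k. k < n \<Longrightarrow> mu (w (nx n k)) = mu' (w k)" using w unfolding walk_def by auto
  have dist: "mu' (w i) \<noteq> mu' (w j)" if ij: "i < j" "j < n" for i j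
  proof
    assume e: "mu' (w i) = mu' (w j)"
    define d where "d = j - i"
    define n' where "n' = n - d"
    define w' where "w' k = (if k \<le> i then w k else w (k + d))" for k
    have "walk w' n'"
      unfolding walk_def
    proof (intro conjI allI impI)
      show "0 < n'" using ij unfolding d_def n'_def by simp
      show "w' 0 = s" using w0 unfolding w'_def by simp
      fix k assume k: "k < n'"
      show "P (w' k)" using wP k ij unfolding w'_def n'_def d_def by auto
      show "mu (w' (nx n' k)) = mu' (w' k)"
      proof (cases "k < i")
        case True
        then have "nx n' k = Suc k" "nx n k = Suc k" using ij k unfolding nx_def n'_def d_def by auto
        then show ?thesis using W[of k] True ij unfolding w'_def by auto
      next
        case False
        show ?thesis
        proof (cases "k = i")
          case True
          show ?thesis
          proof (cases "Suc i = n'")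
            case True
            then have "nx n' k = 0" "nx n j = 0" using \<open>k = i\<close> ij unfolding nx_def n'_def d_def by auto
            then show ?thesis using W[of j] e \<open>k = i\<close> ij unfolding w'_def by auto
          next
            case False
            then have "nx n' k = Suc i" "nx n j = Suc j" using \<open>k = i\<close> ij k unfolding nx_def n'_def d_def by auto
            moreover have "Suc i + d = Suc j" using ij unfolding d_def by simp
            ultimately show ?thesis using W[of j] e \<open>k = i\<close> ij unfolding w'_def by auto
          qed
        next
          case False
          then have ki: "i < k" using \<open>\<not> k < i\<close> by simp
          have kd: "k + d < n" using k ij unfolding n'_def d_def by simp
          show ?thesis
          proof (cases "Suc k = n'")
            case True
            then have "nx n' k = 0" "nx n (k + d) = 0" using ij unfolding nx_def n'_def d_def by auto
            then show ?thesis using W[OF kd] ki unfolding w'_def by auto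
          next
            case False
            then have "nx n' k = Suc k" "nx n (k + d) = Suc k + d" using ij k unfolding nx_def n'_def d_def by auto
            then show ?thesis using W[OF kd] ki unfolding w'_def by auto
          qed
        qed
      qed
    qed
    then have "n \<le> n'" by (rule minn)
    then show False using ij unfolding n'_def d_def by simp
  qed
  define ss where "ss = map w [0..<n]"
  define cs where "cs = map (\<lambda>k. the (mu' (w k))) [0..<n]"
  have len: "length ss = n" "length cs = n" unfolding ss_def cs_def by auto
  have ssn: "ss ! k = w k" if "k < n" for k using that unfolding ss_def by simp
  have csn: "mu' (w k) = Some (cs ! k) \<and> cs ! k \<in> C" if kn: "k < n" for k
  proof -
    obtain c where "c \<in> C" "mu' (w k) = Some c" using P_some[OF wP[OF kn]] by blast
    then show ?thesis using kn unfolding cs_def by simp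
  qed
  have nxlt: "nx n k < n" if "k < n" for k using that npos unfolding nx_def by auto
  have modnx: "(k + 1) mod n = nx n k" if "k < n" for k using that unfolding nx_def by auto
  have prev: "(k + n - 1) mod n < n \<and> nx n ((k + n - 1) mod n) = k" if "k < n" for k
  proof (cases "k = 0")
    case True then show ?thesis using npos unfolding nx_def by auto
  next
    case False
    then have e1: "k + n - 1 = (k - 1) + n" by simp
    have "(k - 1 + n) mod n = k - 1" using that by simp
    then have "(k + n - 1) mod n = k - 1" using e1 by simp
    then show ?thesis using that False unfolding nx_def by auto
  qed
  have domd: "mu (w k) = Some (cs ! ((k + n - 1) mod n))" if "k < n" for k
    using W[of "(k + n - 1) mod n"] prev[OF that] csn[of "(k + n - 1) mod n"] by auto
  show ?thesis
  proof (intro exI conjI)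
    show "pref_cycle S C ps pc ss cs"
      unfolding pref_cycle_def len
    proof (intro conjI allI impI)
      show "ss \<noteq> []" using len npos by auto
      show "n = n" ..
      show "distinct ss" unfolding distinct_conv_nth len
      proof (intro allI impI)
        fix a b assume "a < n" "b < n" "a \<noteq> b"
        then show "ss ! a \<noteq> ss ! b"
        proof (cases "a < b")
          case True then show ?thesis using dist[of a b] ssn \<open>a < n\<close> \<open>b < n\<close> by auto
        next
          case False then have "b < a" using \<open>a \<noteq> b\<close> by simp
          then show ?thesis using dist[of b a] ssn \<open>a < n\<close> \<open>b < n\<close> by auto
        qed
      qed
      show "distinct cs" unfolding distinct_conv_nth len
      proof (intro allI impI)
        fix a b assume "a < n" "b < n" "a \<noteq> b"
        then show "cs ! a \<noteq> cs ! b"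
        proof (cases "a < b")
          case True then show ?thesis using dist[of a b] csn[of a] csn[of b] \<open>a < n\<close> \<open>b < n\<close> by auto
        next
          case False then have "b < a" using \<open>a \<noteq> b\<close> by simp
          then show ?thesis using dist[of b a] csn[of a] csn[of b] \<open>a < n\<close> \<open>b < n\<close> by auto
        qed
      qed
      show "set ss \<subseteq> S" unfolding ss_def using wP unfolding P_def by auto
      show "set cs \<subseteq> C" using csn by (auto simp: in_set_conv_nth len)
      fix k assume k: "k < n"
      show "ps (ss ! k) (Some (cs ! k)) (Some (cs ! ((k + n - 1) mod n)))"
        using wP[OF k] csn[OF k] domd[OF k] ssn[OF k] unfolding P_def by simp
      have kC: "cs ! k \<in> C" and kS: "mu' (w k) = Some (cs ! k)" using csn[OF k] by auto
      have "w (nx n k) \<in> assigned S mu (cs ! k)"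
        using wP[OF nxlt[OF k]] W[OF k] kS unfolding assigned_def P_def by auto
      then show "pc (cs ! k) (Some (ss ! ((k + 1) mod n))) (Some (ss ! k))"
        using K1[OF wP[OF k] kS kC] modnx[OF k] ssn[OF k] ssn[OF nxlt[OF k]] by auto
    qed
    show "s \<in> set ss" unfolding ss_def using w0 npos by auto
    show "S_dominated mu ss cs" unfolding S_dominated_def len using domd ssn by auto
    show "S_dominating mu' ss cs" unfolding S_dominating_def len using csn ssn by auto
    show "\<forall>c\<in>set cs. card (assigned S mu c) = q c \<and> card (assigned S mu' c) = q c"
    proof
      fix c assume "c \<in> set cs"
      then obtain k where k: "k < n" "c = cs ! k" by (auto simp: in_set_conv_nth len)
      then have mc: "mu' (w k) = Some c" and cC: "c \<in> C" using csn by auto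
      show "card (assigned S mu c) = q c \<and> card (assigned S mu' c) = q c"
        using K1[OF wP[OF k(1)] mc cC] cardmu'[OF wP[OF k(1)] mc cC] by simp
    qed
  qed
qed

end
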